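(* Let $\{P_t\}_{t\geq 0}$ be a Markov--Feller semigroup on a Polish space $\mathcal{X}$ which is Ces\`aro eventually continuous at every point of $\mathcal{X}$. Then for any two distinct ergodic measures $\mu$ and $\nu$ of $\{P_t\}_{t\geq 0}$, $\operatorname{supp}\mu\cap\operatorname{supp}\nu=\emptyset$.
   Context: $(\mathcal{X},\rho)$ is a Polish space. A Markov--Feller semigroup $\{P_t\}_{t\ge0}$ is a semigroup of mass-preserving positively linear operators on finite Borel measures, each with a dual linear operator on bounded Borel functions ($\langle f,P_t\mu\rangle=\langle P_tf,\mu\rangle$) preserving bounded continuous functions. $Q_tf(x)=\frac1t\int_0^tP_sf(x)\,ds$ for $t>0$. Ergodic measure: ergodic invariant probability measure. Ces\`aro eventually continuous at $z$: for every bounded Lipschitz $f$, $\limsup_{x\to z}\limsup_{t\to\infty}|Q_tf(x)-Q_tf(z)|=0$. *)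

theory Defs
  imports "HOL-Analysis.Analysis" "HOL-Probability.Probability"
begin

text \<open>A Markov--Feller semigroup on a Polish space is represented by its transition
  kernel K t x = P_t delta_x (a Borel probability measure).\<close>

definition Pf :: "(real \<Rightarrow> 'a::topological_space \<Rightarrow> 'a measure) \<Rightarrow> real \<Rightarrow> ('a \<Rightarrow> real) \<Rightarrow> 'a \<Rightarrow> real" where
  "Pf K t f x = (\<integral>y. f y \<partial>(K t x))"

definition Pmu :: "(real \<Rightarrow> 'a::topological_space \<Rightarrow> 'a measure) \<Rightarrow> real \<Rightarrow> 'a measure \<Rightarrow> 'a measure" where
  "Pmu K t \<mu> = \<mu> \<bind> K t"

definition bcont :: "('a::topological_space \<Rightarrow> real) \<Rightarrow> bool" where
  "bcont f \<longleftrightarrow> continuous_on UNIV f \<and> bounded (range f)"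

definition markov_feller :: "(real \<Rightarrow> 'a::metric_space \<Rightarrow> 'a measure) \<Rightarrow> bool" where
  "markov_feller K \<longleftrightarrow>
     (\<forall>t\<ge>0. K t \<in> borel \<rightarrow>\<^sub>M prob_algebra borel) \<and>
     (\<forall>x. K 0 x = return borel x) \<and>
     (\<forall>s\<ge>0. \<forall>t\<ge>0. \<forall>x. K (s + t) x = Pmu K t (K s x)) \<and>
     (\<forall>t\<ge>0. \<forall>f. bcont f \<longrightarrow> bcont (Pf K t f)) \<and>
     (\<forall>f x. bcont f \<longrightarrow>
        (\<lambda>s. Pf K s f x) \<in> borel_measurable (restrict_space lborel {0..}))"

definition Qf :: "(real \<Rightarrow> 'a::topological_space \<Rightarrow> 'a measure) \<Rightarrow> real \<Rightarrow> ('a \<Rightarrow> real) \<Rightarrow> 'a \<Rightarrow> real" where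
  "Qf K t f x = (1 / t) * (LBINT s=0..t. Pf K s f x)"

definition bounded_lipschitz :: "('a::metric_space \<Rightarrow> real) \<Rightarrow> bool" where
  "bounded_lipschitz f \<longleftrightarrow> bounded (range f) \<and> (\<exists>L. L-lipschitz_on UNIV f)"

text \<open>limsup_{x -> z} limsup_{t -> oo} |Q_t f x - Q_t f z| = 0, in epsilon-delta form.\<close>
definition cesaro_ev_cont :: "(real \<Rightarrow> 'a::metric_space \<Rightarrow> 'a measure) \<Rightarrow> 'a \<Rightarrow> bool" where
  "cesaro_ev_cont K z \<longleftrightarrow>
     (\<forall>f. bounded_lipschitz f \<longrightarrow>
        (\<forall>e>0. \<exists>d>0. \<forall>x. dist x z < d \<longrightarrow>
           Limsup at_top (\<lambda>t. ereal \<bar>Qf K t f x - Qf K t f z\<bar>) \<le> ereal e))"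

definition invariant_prob :: "(real \<Rightarrow> 'a::topological_space \<Rightarrow> 'a measure) \<Rightarrow> 'a measure \<Rightarrow> bool" where
  "invariant_prob K \<mu> \<longleftrightarrow> sets \<mu> = sets borel \<and> prob_space \<mu> \<and> (\<forall>t\<ge>0. Pmu K t \<mu> = \<mu>)"

definition ergodic :: "(real \<Rightarrow> 'a::topological_space \<Rightarrow> 'a measure) \<Rightarrow> 'a measure \<Rightarrow> bool" where
  "ergodic K \<mu> \<longleftrightarrow> invariant_prob K \<mu> \<and>
     (\<forall>A\<in>sets borel. (\<forall>t\<ge>0. AE x in \<mu>. Pf K t (indicator A) x = indicator A x)
        \<longrightarrow> measure \<mu> A = 0 \<or> measure \<mu> A = 1)"

definition supp :: "'a::metric_space measure \<Rightarrow> 'a set" where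
  "supp \<mu> = {x. \<forall>e>0. emeasure \<mu> (ball x e) > 0}"

end

theory Submission
  imports Defs
begin

lemma mf_kernel:
  assumes "markov_feller K" "t \<ge> 0"
  shows "prob_space (K t x)" "sets (K t x) = sets borel"
    "K t \<in> borel \<rightarrow>\<^sub>M subprob_algebra borel"
proof -
  have m: "K t \<in> borel \<rightarrow>\<^sub>M prob_algebra borel" using assms unfolding markov_feller_def by auto
  then have "K t x \<in> space (prob_algebra borel)" by (rule measurable_space) simp
  then show "prob_space (K t x)" "sets (K t x) = sets borel" by (auto simp: space_prob_algebra)
  show "K t \<in> borel \<rightarrow>\<^sub>M subprob_algebra borel" using m by (rule measurable_prob_algebraD)
qed

lemma caratheodory_meas:
  fixes g :: "real \<Rightarrow> 'a::{metric_space,second_countable_topology} \<Rightarrow> real"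
  assumes meas: "\<And>y. (\<lambda>s. g s y) \<in> borel_measurable M"
    and cont: "\<And>s. continuous_on UNIV (g s)"
  shows "(\<lambda>p. g (snd p) (fst p)) \<in> borel_measurable (borel \<Otimes>\<^sub>M M)"
proof -
  obtain D :: "'a set" where D: "countable D" "\<And>X. open X \<Longrightarrow> X \<noteq> {} \<Longrightarrow> \<exists>d\<in>D. d \<in> X"
    using countable_dense_exists by blast
  have "D \<noteq> {}" using D(2)[of UNIV] by auto
  define d where "d = from_nat_into D"
  have dr: "range d = D" unfolding d_def using D(1) \<open>D \<noteq> {}\<close> by (simp add: range_from_nat_into)
  have ex: "\<exists>i. dist y (d i) < r" if "r > 0" for y r
  proof -
    have "ball y r \<noteq> {}" using that by simp
    then obtain e where "e \<in> D" "e \<in> ball y r" using D(2)[of "ball y r"] by auto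
    then show ?thesis using dr by (auto simp: dist_commute)
  qed
  define idx where "idx k y = (LEAST i. dist y (d i) < 1 / Suc k)" for k y
  have idx: "dist y (d (idx k y)) < 1 / Suc k" for k y
    unfolding idx_def by (rule LeastI_ex) (rule ex, simp)
  define u where "u k p = g (snd p) (d (idx k (fst p)))" for k p
  have um: "u k \<in> borel_measurable (borel \<Otimes>\<^sub>M M)" for k
  proof -
    have 1: "(\<lambda>p. g (snd p) (d i)) \<in> borel_measurable (borel \<Otimes>\<^sub>M M)" for i
      by (rule measurable_compose[OF measurable_snd meas])
    have 2: "(\<lambda>p. idx k (fst p)) \<in> borel \<Otimes>\<^sub>M M \<rightarrow>\<^sub>M count_space UNIV"
      unfolding idx_def by measurable
    show ?thesis unfolding u_def
      using measurable_compose_countable'[where f="\<lambda>i p. g (snd p) (d i)" and g="\<lambda>p. idx k (fst p)", OF _ 2] 1 by auto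
  qed
  show ?thesis
  proof (rule borel_measurable_LIMSEQ_real[OF _ um])
    fix p :: "'a \<times> real"
    have "(\<lambda>k. d (idx k (fst p))) \<longlonglongrightarrow> fst p"
    proof (rule tendsto_dist_iff[THEN iffD2], rule Lim_null_comparison)
      show "\<forall>\<^sub>F k in sequentially. norm (dist (d (idx k (fst p))) (fst p)) \<le> 1 / Suc k"
        using idx by (auto simp: dist_commute less_imp_le)
      show "(\<lambda>k. 1 / real (Suc k)) \<longlonglongrightarrow> 0" by (rule LIMSEQ_inverse_real_of_nat[unfolded inverse_eq_divide])
    qed
    moreover have "isCont (g (snd p)) (fst p)" using cont by (simp add: continuous_on_eq_continuous_at)
    ultimately show "(\<lambda>k. u k p) \<longlonglongrightarrow> g (snd p) (fst p)"
      unfolding u_def by (rule isCont_tendsto_compose[rotated])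
  qed
qed


lemma prob_int_bound:
  fixes f :: "'b \<Rightarrow> real"
  assumes "prob_space M" "f \<in> borel_measurable M" "\<And>x. \<bar>f x\<bar> \<le> B"
  shows "integrable M f" "\<bar>\<integral>x. f x \<partial>M\<bar> \<le> B"
proof -
  interpret prob_space M by fact
  show i: "integrable M f" using assms(2,3) by (intro integrable_const_bound[where B=B]) auto
  have b: "f x \<le> B" "-B \<le> f x" for x using assms(3)[of x] by auto
  have "(\<integral>x. f x \<partial>M) \<le> B" using b by (intro integral_le_const i AE_I2) auto
  moreover have "-B \<le> (\<integral>x. f x \<partial>M)" using b by (intro integral_ge_const i AE_I2) auto
  ultimately show "\<bar>\<integral>x. f x \<partial>M\<bar> \<le> B" by auto
qed

lemma bcont_bound:
  assumes "bcont f" obtains B where "B \<ge> 0" "\<And>y. \<bar>f y\<bar> \<le> B"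
proof -
  from assms have "bounded (range f)" by (simp add: bcont_def)
  then obtain B where "\<And>y. norm (f y) \<le> B" by (auto simp: bounded_iff)
  then show ?thesis using that[of B] by (metis abs_ge_zero order_trans real_norm_def)
qed

lemma bcont_meas: "bcont f \<Longrightarrow> f \<in> borel_measurable borel"
  by (simp add: bcont_def borel_measurable_continuous_onI)

lemma Pf_bound:
  fixes K :: "real \<Rightarrow> 'a::metric_space \<Rightarrow> 'a measure" and B :: real
  assumes "markov_feller K" "t \<ge> 0" "f \<in> borel_measurable borel" "\<And>y. \<bar>f y\<bar> \<le> B"
  shows "\<bar>Pf K t f x\<bar> \<le> B" "integrable (K t x) f"
proof -
  have fm: "f \<in> borel_measurable (K t x)"
    using assms(3) by (subst measurable_cong_sets[OF mf_kernel(2)[OF assms(1,2)] refl])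
  show "\<bar>Pf K t f x\<bar> \<le> B" "integrable (K t x) f"
    unfolding Pf_def using prob_int_bound[OF mf_kernel(1)[OF assms(1,2)] fm assms(4)] by auto
qed

lemma lbint_eq:
  fixes h :: "real \<Rightarrow> real"
  assumes "0 \<le> t"
  shows "(LBINT s=ereal 0..ereal t. h s) = (\<integral>s. indicator {0..t} s * h s \<partial>lborel)"
  using assms by (simp add: interval_integral_Icc set_lebesgue_integral_def)

lemma Pf_joint:
  fixes K :: "real \<Rightarrow> 'a::polish_space \<Rightarrow> 'a measure"
  assumes MF: "markov_feller K" and f: "bcont f"
  shows "(\<lambda>p. indicator {0..} (snd p) * Pf K (snd p) f (fst p)) \<in> borel_measurable (borel \<Otimes>\<^sub>M lborel)"
proof (rule caratheodory_meas[where g="\<lambda>s y. indicator {0..} s * Pf K s f y", simplified])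
  fix y
  have "(\<lambda>s. Pf K s f y) \<in> borel_measurable (restrict_space lborel {0..})"
    using MF f unfolding markov_feller_def by auto
  then show "(\<lambda>s. indicator {0..} s * Pf K s f y) \<in> borel_measurable lborel"
    by (subst (asm) borel_measurable_restrict_space_iff) auto
next
  fix s :: real
  show "continuous_on UNIV (\<lambda>y. indicator {0..} s * Pf K s f y)"
  proof (cases "s \<ge> 0")
    case True
    then have "bcont (Pf K s f)" using MF f unfolding markov_feller_def by auto
    then show ?thesis by (intro continuous_intros) (auto simp: bcont_def)
  qed simp
qed

lemma Qf_alt:
  assumes "0 \<le> t"
  shows "Qf K t f y = (1/t) * (\<integral>s. indicator {0..t} s * (indicator {0..} s * Pf K s f y) \<partial>lborel)"
proof -
  have "Qf K t f y = (1/t) * (\<integral>s. indicator {0..t} s * Pf K s f y \<partial>lborel)"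
    unfolding Qf_def using lbint_eq[OF assms] by (simp add: zero_ereal_def)
  also have "(\<lambda>s. indicator {0..t} s * Pf K s f y) = (\<lambda>s. indicator {0..t} s * (indicator {0..} s * Pf K s f y))"
    by (auto simp: fun_eq_iff split: split_indicator)
  finally show ?thesis .
qed

lemma Qf_meas_fubini:
  fixes K :: "real \<Rightarrow> 'a::polish_space \<Rightarrow> 'a measure"
  assumes MF: "markov_feller K" and f: "bcont f" and t: "0 < t"
    and rho: "prob_space \<rho>" "sets \<rho> = sets borel"
  shows "(\<lambda>y. Qf K t f y) \<in> borel_measurable borel"
    "(\<integral>y. Qf K t f y \<partial>\<rho>) = (1/t) * (LBINT s=0..t. (\<integral>y. Pf K s f y \<partial>\<rho>))"
proof -
  obtain B where B: "B \<ge> 0" "\<And>y. \<bar>f y\<bar> \<le> B" using bcont_bound[OF f] by blast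
  define F where "F y s = indicator {0..t} s * (indicator {0..} s * Pf K s f y)" for y s
  have Fm: "(\<lambda>p. F (fst p) (snd p)) \<in> borel_measurable (borel \<Otimes>\<^sub>M lborel)"
    unfolding F_def using Pf_joint[OF MF f] by measurable
  have FB: "\<bar>F y s\<bar> \<le> B * indicator (UNIV \<times> {0..t}) (y, s)" for y s
    using Pf_bound[OF MF _ bcont_meas[OF f] B(2)] B(1)
    by (auto simp: F_def split: split_indicator)
  have Q: "Qf K t f y = (1/t) * (\<integral>s. F y s \<partial>lborel)" for y
    unfolding F_def using Qf_alt[of t K f y] t by simp
  interpret rho: prob_space \<rho> by fact
  interpret P: pair_sigma_finite \<rho> lborel ..
  show "(\<lambda>y. Qf K t f y) \<in> borel_measurable borel"
    unfolding Q using lborel.borel_measurable_lebesgue_integral[of "F" borel] Fm by simp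
  have spc: "space \<rho> = UNIV" using rho(2) sets_eq_imp_space_eq by fastforce
  have Fm': "(\<lambda>p. F (fst p) (snd p)) \<in> borel_measurable (\<rho> \<Otimes>\<^sub>M lborel)"
    using Fm by (subst measurable_cong_sets[OF sets_pair_measure_cong[OF rho(2) refl] refl])
  have U: "UNIV \<in> sets \<rho>" using sets.top[of \<rho>] spc by simp
  have I: "{0..t} \<in> sets lborel" by simp
  have setT: "UNIV \<times> {0..t} \<in> sets (\<rho> \<Otimes>\<^sub>M lborel)"
    by (rule pair_measureI[OF U I])
  have "emeasure (\<rho> \<Otimes>\<^sub>M lborel) (UNIV \<times> {0..t}) = emeasure \<rho> UNIV * emeasure lborel {0..t}"
    by (rule lborel.emeasure_pair_measure_Times[OF U I])
  then have "emeasure (\<rho> \<Otimes>\<^sub>M lborel) (UNIV \<times> {0..t}) < \<infinity>"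
    using spc rho.emeasure_space_1 t by (simp add: ennreal_mult_less_top)
  then have iB: "integrable (\<rho> \<Otimes>\<^sub>M lborel) (\<lambda>p. B * indicator (UNIV \<times> {0..t}) p)"
    using setT by simp
  have FB': "norm (F (fst p) (snd p)) \<le> norm (B * indicator (UNIV \<times> {0..t}) p)" for p
    using FB[of "fst p" "snd p"] B(1) by (cases p) (auto split: split_indicator)
  have iF: "integrable (\<rho> \<Otimes>\<^sub>M lborel) (\<lambda>p. F (fst p) (snd p))"
    by (rule Bochner_Integration.integrable_bound[OF iB Fm']) (rule AE_I2, rule FB')
  have "(\<integral>s. (\<integral>y. F y s \<partial>\<rho>) \<partial>lborel) = (\<integral>y. (\<integral>s. F y s \<partial>lborel) \<partial>\<rho>)"
    by (rule P.Fubini_integral) (use iF in \<open>simp add: case_prod_beta'\<close>)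
  moreover have "(\<integral>y. F y s \<partial>\<rho>) = indicator {0..t} s * (\<integral>y. Pf K s f y \<partial>\<rho>)" for s
    unfolding F_def by (auto split: split_indicator)
  ultimately have "(\<integral>y. (\<integral>s. F y s \<partial>lborel) \<partial>\<rho>) = (LBINT s=0..t. (\<integral>y. Pf K s f y \<partial>\<rho>))"
    using lbint_eq[of t "\<lambda>s. \<integral>y. Pf K s f y \<partial>\<rho>"] t by (simp add: zero_ereal_def)
  then show "(\<integral>y. Qf K t f y \<partial>\<rho>) = (1/t) * (LBINT s=0..t. (\<integral>y. Pf K s f y \<partial>\<rho>))"
    unfolding Q by simp
qed


lemma Pf_meas:
  assumes MF: "markov_feller K" and r: "r \<ge> 0" and h: "h \<in> borel_measurable borel"
  shows "(\<lambda>y. Pf K r h y) \<in> borel_measurable borel"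
  unfolding Pf_def
  by (rule measurable_compose[OF mf_kernel(3)[OF MF r] integral_measurable_subprob_algebra[OF h]])

lemma bind_int:
  fixes h :: "'a::metric_space \<Rightarrow> real"
  assumes MF: "markov_feller K" and r: "r \<ge> 0" and rho: "prob_space \<rho>" "sets \<rho> = sets borel"
    and h: "h \<in> borel_measurable borel" "\<And>y. \<bar>h y\<bar> \<le> C"
  shows "(\<integral>y. Pf K r h y \<partial>\<rho>) = (\<integral>w. h w \<partial>(\<rho> \<bind> K r))"
proof -
  have N: "K r \<in> \<rho> \<rightarrow>\<^sub>M subprob_algebra borel"
    using mf_kernel(3)[OF MF r] by (subst measurable_cong_sets[OF rho(2) refl])
  have "(\<integral>w. h w \<partial>(\<rho> \<bind> K r)) = (\<integral>y. (\<integral>w. h w \<partial>K r y) \<partial>\<rho>)"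
  proof (rule integral_bind[where B=C and B'=1])
    show "finite_measure \<rho>" using rho(1) unfolding prob_space_def by blast
    show "AE x in \<rho>. emeasure (K r x) (space (K r x)) \<le> ennreal 1"
      using prob_space.emeasure_space_1[OF mf_kernel(1)[OF MF r]] by simp
  qed (use h N in auto)
  then show ?thesis unfolding Pf_def by simp
qed

lemma int_ind_bounded:
  fixes \<phi> :: "real \<Rightarrow> real"
  assumes "\<phi> \<in> borel_measurable lborel" "\<And>r. \<bar>\<phi> r\<bar> \<le> B"
  shows "integrable lborel (\<lambda>r. indicator {a..b} r * \<phi> r)"
proof (rule Bochner_Integration.integrable_bound[where f="\<lambda>r. B * indicator {a..b} r"])
  have "emeasure lborel {a..b} < \<infinity>" by (cases "a \<le> b") auto
  then show "integrable lborel (\<lambda>r. B * indicator {a..b} r)" by simp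
  show "(\<lambda>r. indicator {a..b} r * \<phi> r) \<in> borel_measurable lborel" using assms(1) by measurable
  show "AE x in lborel. norm (indicator {a..b} x * \<phi> x) \<le> norm (B * indicator {a..b} x :: real)"
  proof (intro AE_I2)
    fix x
    have "\<bar>\<phi> x\<bar> \<le> \<bar>B\<bar>" using assms(2)[of x] by linarith
    then show "norm (indicator {a..b} x * \<phi> x) \<le> norm (B * indicator {a..b} x :: real)"
      by (auto split: split_indicator)
  qed
qed

lemma shift_bound:
  fixes \<phi> :: "real \<Rightarrow> real"
  assumes phm: "\<phi> \<in> borel_measurable lborel" and phb: "\<And>r. \<bar>\<phi> r\<bar> \<le> B" and s: "s \<ge> 0" and t: "t \<ge> 0"
  shows "\<bar>(\<integral>r. indicator {0..t} r * \<phi> (s + r) \<partial>lborel) - (\<integral>r. indicator {0..t} r * \<phi> r \<partial>lborel)\<bar> \<le> 2 * s * B"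
proof -
  have B: "B \<ge> 0" using phb[of 0] by linarith
  have "(\<integral>r. indicator {s..s+t} r * \<phi> r \<partial>lborel) = \<bar>1\<bar> *\<^sub>R (\<integral>x. indicator {s..s+t} (s + 1 * x) * \<phi> (s + 1 * x) \<partial>lborel)"
    by (rule lborel_integral_real_affine) simp
  also have "\<dots> = (\<integral>r. indicator {0..t} r * \<phi> (s + r) \<partial>lborel)"
    by (auto intro!: Bochner_Integration.integral_cong split: split_indicator)
  finally have sh: "(\<integral>r. indicator {0..t} r * \<phi> (s + r) \<partial>lborel) = (\<integral>r. indicator {s..s+t} r * \<phi> r \<partial>lborel)" by simp
  have i1: "integrable lborel (\<lambda>r. indicator {s..s+t} r * \<phi> r)" by (rule int_ind_bounded[OF phm phb])
  have i2: "integrable lborel (\<lambda>r. indicator {0..t} r * \<phi> r)" by (rule int_ind_bounded[OF phm phb])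
  have "(\<integral>r. indicator {s..s+t} r * \<phi> r \<partial>lborel) - (\<integral>r. indicator {0..t} r * \<phi> r \<partial>lborel)
      = (\<integral>r. indicator {s..s+t} r * \<phi> r - indicator {0..t} r * \<phi> r \<partial>lborel)"
    using i1 i2 by simp
  also have "\<bar>\<dots>\<bar> \<le> (\<integral>r. B * indicator {0..s} r + B * indicator {t..t+s} r \<partial>lborel)"
  proof (rule integral_abs_bound_integral)
    show "integrable lborel (\<lambda>r. indicator {s..s+t} r * \<phi> r - indicator {0..t} r * \<phi> r)" using i1 i2 by simp
    show "integrable lborel (\<lambda>r. B * indicator {0..s} r + B * indicator {t..t+s} r :: real)"
      using s by (intro Bochner_Integration.integrable_add integrable_mult_right integrable_real_indicator) auto
    fix r :: real
    have pb: "\<bar>\<phi> r\<bar> \<le> B" by (rule phb)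
    show "\<bar>indicator {s..s+t} r * \<phi> r - indicator {0..t} r * \<phi> r\<bar> \<le> B * indicator {0..s} r + B * indicator {t..t+s} r"
      using pb B s t by (auto split: split_indicator)
  qed
  also have "\<dots> = 2 * s * B" using s t by simp
  finally show ?thesis using sh by simp
qed


lemma Pf_s_meas:
  assumes MF: "markov_feller K" and f: "bcont f"
  shows "(\<lambda>r. indicator {0..} r * Pf K r f y) \<in> borel_measurable lborel"
proof -
  have "(\<lambda>s. Pf K s f y) \<in> borel_measurable (restrict_space lborel {0..})"
    using MF f unfolding markov_feller_def by auto
  then show ?thesis by (subst (asm) borel_measurable_restrict_space_iff) auto
qed

lemma PQ_bound:
  fixes K :: "real \<Rightarrow> 'a::polish_space \<Rightarrow> 'a measure"
  assumes MF: "markov_feller K" and f: "bcont f" and B: "\<And>y. \<bar>f y\<bar> \<le> B" and s: "s \<ge> 0" and t: "t > 0"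
  shows "\<bar>(\<integral>w. Qf K t f w \<partial>K s y) - Qf K t f y\<bar> \<le> 2 * s * B / t"
proof -
  have 1: "(\<integral>w. Qf K t f w \<partial>K s y) = (1/t) * (LBINT r=0..t. (\<integral>w. Pf K r f w \<partial>K s y))"
    by (rule Qf_meas_fubini(2)[OF MF f t mf_kernel(1)[OF MF s] mf_kernel(2)[OF MF s]])
  have 2: "(\<integral>w. Pf K r f w \<partial>K s y) = Pf K (s+r) f y" if r: "r \<ge> 0" for r
  proof -
    have "(\<integral>w. Pf K r f w \<partial>K s y) = (\<integral>w. f w \<partial>(K s y \<bind> K r))"
      by (rule bind_int[OF MF r mf_kernel(1)[OF MF s] mf_kernel(2)[OF MF s] bcont_meas[OF f] B])
    also have "K s y \<bind> K r = K (s + r) y"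
      using MF s r unfolding markov_feller_def Pmu_def by auto
    finally show ?thesis unfolding Pf_def .
  qed
  define \<phi> where "\<phi> r = indicator {0..} r * Pf K r f y" for r
  have phm: "\<phi> \<in> borel_measurable lborel" unfolding \<phi>_def by (rule Pf_s_meas[OF MF f])
  have phb: "\<bar>\<phi> r\<bar> \<le> B" for r
    using Pf_bound(1)[OF MF _ bcont_meas[OF f] B, of r] B[of y]
    unfolding \<phi>_def by (auto split: split_indicator)
  have "(LBINT r=0..t. (\<integral>w. Pf K r f w \<partial>K s y)) = (\<integral>r. indicator {0..t} r * (\<integral>w. Pf K r f w \<partial>K s y) \<partial>lborel)"
    using lbint_eq[of t] t by (simp add: zero_ereal_def)
  also have "\<dots> = (\<integral>r. indicator {0..t} r * \<phi> (s + r) \<partial>lborel)"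
    using 2 s unfolding \<phi>_def by (intro Bochner_Integration.integral_cong) (auto split: split_indicator)
  finally have X: "(\<integral>w. Qf K t f w \<partial>K s y) = (1/t) * (\<integral>r. indicator {0..t} r * \<phi> (s + r) \<partial>lborel)"
    using 1 by simp
  have Y: "Qf K t f y = (1/t) * (\<integral>r. indicator {0..t} r * \<phi> r \<partial>lborel)"
    using Qf_alt[of t K f y] t unfolding \<phi>_def by simp
  have "\<bar>(\<integral>r. indicator {0..t} r * \<phi> (s + r) \<partial>lborel) - (\<integral>r. indicator {0..t} r * \<phi> r \<partial>lborel)\<bar> \<le> 2 * s * B"
    by (rule shift_bound[OF phm phb s]) (use t in simp)
  then have "(1/t) * \<bar>(\<integral>r. indicator {0..t} r * \<phi> (s + r) \<partial>lborel) - (\<integral>r. indicator {0..t} r * \<phi> r \<partial>lborel)\<bar> \<le> (1/t) * (2 * s * B)"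
    using t by (intro mult_left_mono) auto
  then show ?thesis unfolding X Y using t by (simp add: abs_mult diff_divide_distrib[symmetric])
qed

lemma Qf_meas:
  fixes K :: "real \<Rightarrow> 'a::polish_space \<Rightarrow> 'a measure"
  assumes MF: "markov_feller K" and f: "bcont f" and t: "t \<ge> 0"
  shows "(\<lambda>y. Qf K t f y) \<in> borel_measurable borel"
proof (cases "t = 0")
  case True then show ?thesis by (simp add: Qf_def)
next
  case False
  then have "(\<lambda>y. Qf K t f y) \<in> borel_measurable borel \<and> True"
    using Qf_meas_fubini(1)[OF MF f _ prob_space_return[of _ borel] sets_return] t by auto
  then show ?thesis by simp
qed

lemma Qf_bnd:
  fixes K :: "real \<Rightarrow> 'a::polish_space \<Rightarrow> 'a measure"
  assumes MF: "markov_feller K" and f: "bcont f" and B: "\<And>y. \<bar>f y\<bar> \<le> B" and t: "t \<ge> 0"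
  shows "\<bar>Qf K t f y\<bar> \<le> B"
proof (cases "t = 0")
  case True then show ?thesis using B[of y] by (simp add: Qf_def)
next
  case False
  then have t: "t > 0" using t by simp
  define \<phi> where "\<phi> r = indicator {0..} r * Pf K r f y" for r
  have phm: "\<phi> \<in> borel_measurable lborel" unfolding \<phi>_def by (rule Pf_s_meas[OF MF f])
  have phb: "\<bar>\<phi> r\<bar> \<le> B" for r
    using Pf_bound(1)[OF MF _ bcont_meas[OF f] B, of r] B[of y]
    unfolding \<phi>_def by (auto split: split_indicator)
  have Y: "Qf K t f y = (1/t) * (\<integral>r. indicator {0..t} r * \<phi> r \<partial>lborel)"
    using Qf_alt[of t K f y] t unfolding \<phi>_def by simp
  have "\<bar>\<integral>r. indicator {0..t} r * \<phi> r \<partial>lborel\<bar> \<le> (\<integral>r. B * indicator {0..t} r \<partial>lborel)"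
  proof (rule integral_abs_bound_integral)
    show "integrable lborel (\<lambda>r. indicator {0..t} r * \<phi> r)" by (rule int_ind_bounded[OF phm phb])
    show "integrable lborel (\<lambda>r. B * indicator {0..t} r :: real)"
      using t by (intro integrable_mult_right integrable_real_indicator) auto
    fix r show "\<bar>indicator {0..t} r * \<phi> r\<bar> \<le> B * indicator {0..t} r"
      using phb[of r] by (auto split: split_indicator)
  qed
  also have "\<dots> = B * t" using t by simp
  finally show ?thesis unfolding Y using t by (simp add: abs_mult divide_le_eq mult.commute)
qed


definition uu :: "(real \<Rightarrow> 'a::topological_space \<Rightarrow> 'a measure) \<Rightarrow> ('a \<Rightarrow> real) \<Rightarrow> 'a \<Rightarrow> nat \<Rightarrow> 'a \<Rightarrow> real" where
  "uu K f z n y = \<bar>Qf K (real n) f y - Qf K (real n) f z\<bar>"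

definition HH :: "(real \<Rightarrow> 'a::topological_space \<Rightarrow> 'a measure) \<Rightarrow> ('a \<Rightarrow> real) \<Rightarrow> 'a \<Rightarrow> 'a \<Rightarrow> ennreal" where
  "HH K f z y = limsup (\<lambda>n. ennreal (uu K f z n y))"

definition Hr :: "(real \<Rightarrow> 'a::topological_space \<Rightarrow> 'a measure) \<Rightarrow> ('a \<Rightarrow> real) \<Rightarrow> 'a \<Rightarrow> 'a \<Rightarrow> real" where
  "Hr K f z y = enn2real (HH K f z y)"

context
  fixes K :: "real \<Rightarrow> 'a::polish_space \<Rightarrow> 'a measure" and f :: "'a \<Rightarrow> real" and z :: 'a and B :: real
  assumes MF: "markov_feller K" and f: "bcont f" and B0: "B \<ge> 0" and B: "\<And>y. \<bar>f y\<bar> \<le> B"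
begin

lemma uu_meas: "uu K f z n \<in> borel_measurable borel"
  unfolding uu_def using Qf_meas[OF MF f, of "real n"] by measurable

lemma uu_bnd: "0 \<le> uu K f z n y" "uu K f z n y \<le> 2 * B"
  using Qf_bnd[OF MF f B, of "real n" y] Qf_bnd[OF MF f B, of "real n" z] unfolding uu_def by auto

lemma HH_meas: "HH K f z \<in> borel_measurable borel"
  unfolding HH_def using uu_meas by measurable

lemma HH_bnd: "HH K f z y \<le> ennreal (2 * B)"
  unfolding HH_def by (rule Limsup_bounded) (use uu_bnd B0 in \<open>auto intro!: always_eventually\<close>)

lemma HH_Hr: "HH K f z y = ennreal (Hr K f z y)"
proof -
  have "HH K f z y < top" using HH_bnd[of y] by (meson ennreal_less_top le_less_trans)
  then show ?thesis unfolding Hr_def by (simp add: less_top)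
qed

lemma Hr_bnd: "0 \<le> Hr K f z y" "Hr K f z y \<le> 2 * B"
proof -
  show "0 \<le> Hr K f z y" unfolding Hr_def by simp
  then show "Hr K f z y \<le> 2 * B" using HH_bnd[of y] B0 unfolding HH_Hr by simp
qed

lemma Hr_meas: "Hr K f z \<in> borel_measurable borel"
  unfolding Hr_def using HH_meas by measurable


lemma stepA:
  assumes ev: "cesaro_ev_cont K z" and bl: "bounded_lipschitz f" and c: "c > 0"
  shows "\<exists>d>0. \<forall>y. dist y z < d \<longrightarrow> Hr K f z y \<le> c"
proof -
  obtain d where d: "d > 0" and dd: "\<And>x. dist x z < d \<Longrightarrow>
      Limsup at_top (\<lambda>t. ereal \<bar>Qf K t f x - Qf K t f z\<bar>) \<le> ereal (c/2)"
    using ev bl c unfolding cesaro_ev_cont_def by (meson half_gt_zero)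
  have "Hr K f z y \<le> c" if y: "dist y z < d" for y
  proof -
    have "Limsup at_top (\<lambda>t. ereal \<bar>Qf K t f y - Qf K t f z\<bar>) < ereal c"
      using dd[OF y] c by (simp add: le_less_trans)
    then have "eventually (\<lambda>t. ereal \<bar>Qf K t f y - Qf K t f z\<bar> < ereal c) at_top"
      by (rule Limsup_lessD)
    then have "eventually (\<lambda>n. ereal \<bar>Qf K (real n) f y - Qf K (real n) f z\<bar> < ereal c) sequentially"
      by (rule eventually_compose_filterlim[OF _ filterlim_real_sequentially])
    then have "eventually (\<lambda>n. ennreal (uu K f z n y) \<le> ennreal c) sequentially"
      by eventually_elim (auto simp: uu_def)
    then have "HH K f z y \<le> ennreal c" unfolding HH_def by (rule Limsup_bounded)
    then show ?thesis using c unfolding HH_Hr by simp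
  qed
  then show ?thesis using d by blast
qed

lemma stepB_enn:
  assumes s: "s \<ge> 0"
  shows "HH K f z y \<le> (\<integral>\<^sup>+w. HH K f z w \<partial>K s y)"
proof -
  let ?M = "K s y"
  have Mp: "prob_space ?M" and Ms: "sets ?M = sets borel" using mf_kernel[OF MF s] by auto
  interpret M: prob_space ?M by (rule Mp)
  have meas: "g \<in> borel_measurable ?M" if "g \<in> borel_measurable borel" for g :: "'a \<Rightarrow> real"
    using that by (subst measurable_cong_sets[OF Ms refl])
  have measE: "g \<in> borel_measurable ?M" if "g \<in> borel_measurable borel" for g :: "'a \<Rightarrow> ennreal"
    using that by (subst measurable_cong_sets[OF Ms refl])
  define V where "V n = (\<integral>\<^sup>+w. ennreal (uu K f z n w) \<partial>?M)" for n
  have iu: "integrable ?M (uu K f z n)" for n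
    using prob_int_bound(1)[OF Mp meas[OF uu_meas], where B="2*B"] uu_bnd by (simp add: abs_le_iff)
  have Vr: "V n = ennreal (\<integral>w. uu K f z n w \<partial>?M)" for n
    unfolding V_def by (rule nn_integral_eq_integral[OF iu]) (simp add: uu_bnd)
  have key: "uu K f z n y \<le> (\<integral>w. uu K f z n w \<partial>?M) + 2 * s * B / real n" if n: "n > 0" for n
  proof -
    let ?Q = "\<lambda>w. Qf K (real n) f w" and ?c = "Qf K (real n) f z"
    have iQ: "integrable ?M ?Q"
      using prob_int_bound(1)[OF Mp meas[OF Qf_meas[OF MF f]] Qf_bnd[OF MF f B]] by simp
    have 1: "\<bar>(\<integral>w. ?Q w \<partial>?M) - ?Q y\<bar> \<le> 2 * s * B / real n"
      using PQ_bound[OF MF f B s, of "real n" y] n by simp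
    have "(\<integral>w. ?Q w \<partial>?M) - ?c = (\<integral>w. ?Q w - ?c \<partial>?M)"
      using iQ by (simp add: M.prob_space)
    also have "\<bar>\<dots>\<bar> \<le> (\<integral>w. \<bar>?Q w - ?c\<bar> \<partial>?M)"
      using integral_norm_bound[of ?M "\<lambda>w. ?Q w - ?c"] by simp
    finally have 2: "\<bar>(\<integral>w. ?Q w \<partial>?M) - ?c\<bar> \<le> (\<integral>w. uu K f z n w \<partial>?M)" unfolding uu_def .
    show ?thesis using 1 2 unfolding uu_def by linarith
  qed
  show ?thesis
  proof (rule ennreal_le_epsilon)
    fix e :: real assume e: "0 < e"
    have "(\<lambda>n. 2 * s * B / real n) \<longlonglongrightarrow> 0" by (rule lim_const_over_n)
    then have "eventually (\<lambda>n. 2 * s * B / real n < e) sequentially" using e by (rule order_tendstoD(2))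
    then have ev: "eventually (\<lambda>n. ennreal (uu K f z n y) \<le> V n + ennreal e) sequentially"
      using eventually_gt_at_top[of 0]
    proof eventually_elim
      case (elim n)
      have le: "uu K f z n y \<le> (\<integral>w. uu K f z n w \<partial>?M) + e" using key[of n] elim by linarith
      have nn: "0 \<le> (\<integral>w. uu K f z n w \<partial>?M)" by (simp add: uu_bnd)
      from le have "ennreal (uu K f z n y) \<le> ennreal ((\<integral>w. uu K f z n w \<partial>?M) + e)"
        by (rule ennreal_leI)
      also have "\<dots> = V n + ennreal e" unfolding Vr using nn e by (intro ennreal_plus) auto
      finally show ?case .
    qed
    have L: "limsup V \<le> (\<integral>\<^sup>+w. HH K f z w \<partial>?M)"
      unfolding V_def HH_def
    proof (rule nn_integral_limsup[where w="\<lambda>_. ennreal (2 * B)"])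
      show "(\<lambda>w. ennreal (uu K f z i w)) \<in> borel_measurable ?M" for i
        by (rule measE) (use uu_meas in measurable)
      show "(\<lambda>_. ennreal (2 * B)) \<in> borel_measurable ?M" by simp
      show "AE w in ?M. ennreal (uu K f z i w) \<le> ennreal (2 * B)" for i
        using uu_bnd(2) by (intro AE_I2 ennreal_leI)
      show "(\<integral>\<^sup>+w. ennreal (2 * B) \<partial>?M) < \<infinity>" by (simp add: M.emeasure_space_1)
    qed
    have "HH K f z y \<le> limsup (\<lambda>n. V n + ennreal e)" unfolding HH_def by (rule Limsup_mono[OF ev])
    also have "(\<lambda>n. V n + ennreal e) = (\<lambda>n. ennreal e + V n)" by (simp add: add.commute)
    also have "limsup (\<lambda>n. ennreal e + V n) = ennreal e + limsup V"
      by (rule Limsup_const_add) simp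
    also have "\<dots> \<le> ennreal e + (\<integral>\<^sup>+w. HH K f z w \<partial>?M)" by (rule add_left_mono[OF L])
    finally show "HH K f z y \<le> (\<integral>\<^sup>+w. HH K f z w \<partial>?M) + ennreal e" by (simp add: add.commute)
  qed
qed

lemma stepB:
  assumes s: "s \<ge> 0"
  shows "Hr K f z y \<le> (\<integral>w. Hr K f z w \<partial>K s y)"
proof -
  let ?M = "K s y"
  have Mp: "prob_space ?M" and Ms: "sets ?M = sets borel" using mf_kernel[OF MF s] by auto
  have hm: "Hr K f z \<in> borel_measurable ?M"
    using Hr_meas by (subst measurable_cong_sets[OF Ms refl])
  have ih: "integrable ?M (Hr K f z)"
    using prob_int_bound(1)[OF Mp hm, where B="2*B"] Hr_bnd by (simp add: abs_le_iff)
  have "(\<integral>\<^sup>+w. HH K f z w \<partial>?M) = ennreal (\<integral>w. Hr K f z w \<partial>?M)"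
    unfolding HH_Hr by (rule nn_integral_eq_integral[OF ih]) (simp add: Hr_bnd)
  then have "ennreal (Hr K f z y) \<le> ennreal (\<integral>w. Hr K f z w \<partial>?M)"
    using stepB_enn[OF s, of y] unfolding HH_Hr by simp
  moreover have "0 \<le> (\<integral>w. Hr K f z w \<partial>?M)" by (simp add: Hr_bnd)
  ultimately show ?thesis by simp
qed

end


lemma ergodicD:
  assumes "ergodic K \<mu>"
  shows "sets \<mu> = sets borel" "prob_space \<mu>" "\<And>s. s \<ge> 0 \<Longrightarrow> \<mu> \<bind> K s = \<mu>"
  using assms unfolding ergodic_def invariant_prob_def Pmu_def by auto

context
  fixes K :: "real \<Rightarrow> 'a::polish_space \<Rightarrow> 'a measure" and f :: "'a \<Rightarrow> real" and z :: 'a and B :: real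
  assumes MF: "markov_feller K" and f: "bcont f" and B0: "B \<ge> 0" and B: "\<And>y. \<bar>f y\<bar> \<le> B"
begin

lemma stepF:
  assumes erg: "ergodic K \<mu>" and zs: "z \<in> supp \<mu>" and ev: "cesaro_ev_cont K z"
    and bl: "bounded_lipschitz f" and c: "c > 0"
  shows "AE y in \<mu>. Hr K f z y \<le> c"
proof -
  note mu = ergodicD[OF erg]
  interpret prob_space \<mu> by (rule mu(2))
  have spc: "space \<mu> = UNIV" using mu(1) sets_eq_imp_space_eq by fastforce
  have mcong: "g \<in> borel_measurable \<mu>" if "g \<in> borel_measurable borel" for g :: "'a \<Rightarrow> real"
    using that by (subst measurable_cong_sets[OF mu(1) refl])
  have Hm[measurable]: "Hr K f z \<in> borel_measurable borel" by (rule Hr_meas[OF MF f B0 B])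
  note Hb = Hr_bnd[OF MF f B0 B, of z]
  define A where "A = {y. c < Hr K f z y}"
  have Ab: "A \<in> sets borel" unfolding A_def by measurable
  define g where "g y = max (Hr K f z y - c) 0" for y
  have gm: "g \<in> borel_measurable borel" unfolding g_def by measurable
  have gb: "0 \<le> g y" "g y \<le> 2 * B" "\<bar>g y\<bar> \<le> 2 * B" for y using Hb[of y] c B0 unfolding g_def by auto
  have gsub: "g y \<le> Pf K s g y" if s: "s \<ge> 0" for s y
  proof -
    let ?M = "K s y"
    have Mp: "prob_space ?M" and Ms: "sets ?M = sets borel" using mf_kernel[OF MF s] by auto
    interpret M: prob_space ?M by (rule Mp)
    have mc: "h \<in> borel_measurable ?M" if "h \<in> borel_measurable borel" for h :: "'a \<Rightarrow> real"
      using that by (subst measurable_cong_sets[OF Ms refl])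
    have iH: "integrable ?M (Hr K f z)" using prob_int_bound(1)[OF Mp mc[OF Hm], where B="2*B"] Hb by (simp add: abs_le_iff)
    have ig: "integrable ?M g" using prob_int_bound(1)[OF Mp mc[OF gm], where B="2*B"] gb by simp
    have "(\<integral>w. Hr K f z w \<partial>?M) - c = (\<integral>w. Hr K f z w - c \<partial>?M)" using iH by (simp add: M.prob_space)
    also have "\<dots> \<le> (\<integral>w. g w \<partial>?M)" using iH ig by (intro integral_mono) (auto simp: g_def)
    finally have "Hr K f z y - c \<le> Pf K s g y" using stepB[OF MF f B0 B s, where z=z and y=y] unfolding Pf_def by linarith
    moreover have "0 \<le> Pf K s g y" unfolding Pf_def using gb by simp
    ultimately show ?thesis unfolding g_def by simp
  qed
  have inv: "AE y in \<mu>. Pf K s (indicator A) y = indicator A y" if s: "s \<ge> 0" for s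
  proof -
    have Pgm: "(\<lambda>y. Pf K s g y) \<in> borel_measurable borel" by (rule Pf_meas[OF MF s gm])
    have iPg: "integrable \<mu> (\<lambda>y. Pf K s g y)"
      using prob_int_bound(1)[OF mu(2) mcong[OF Pgm], where B="2*B"] Pf_bound(1)[OF MF s gm gb(3)] by simp
    have ig: "integrable \<mu> g" using prob_int_bound(1)[OF mu(2) mcong[OF gm], where B="2*B"] gb by simp
    have "(\<integral>y. Pf K s g y \<partial>\<mu>) = (\<integral>y. g y \<partial>(\<mu> \<bind> K s))"
      by (rule bind_int[OF MF s mu(2) mu(1) gm gb(3)])
    then have "(\<integral>y. Pf K s g y \<partial>\<mu>) = (\<integral>y. g y \<partial>\<mu>)" using mu(3)[OF s] by simp
    then have "(\<integral>y. Pf K s g y - g y \<partial>\<mu>) = 0" using iPg ig by simp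
    moreover have "integrable \<mu> (\<lambda>y. Pf K s g y - g y)" using iPg ig by simp
    ultimately have "AE y in \<mu>. Pf K s g y - g y = 0"
      using integral_nonneg_eq_0_iff_AE[of \<mu> "\<lambda>y. Pf K s g y - g y"] gsub[OF s] by simp
    then have P1: "AE y in \<mu>. y \<notin> A \<longrightarrow> Pf K s (indicator A) y = 0"
    proof (rule AE_mp, intro AE_I2 impI)
      fix y assume eq: "Pf K s g y - g y = 0" and yA: "y \<notin> A"
      let ?M = "K s y"
      have Mp: "prob_space ?M" and Ms: "sets ?M = sets borel" using mf_kernel[OF MF s] by auto
      have mc: "h \<in> borel_measurable ?M" if "h \<in> borel_measurable borel" for h :: "'a \<Rightarrow> real"
        using that by (subst measurable_cong_sets[OF Ms refl])
      have "g y = 0" using yA c unfolding g_def A_def by auto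
      then have "(\<integral>w. g w \<partial>?M) = 0" using eq unfolding Pf_def by simp
      moreover have "integrable ?M g" using prob_int_bound(1)[OF Mp mc[OF gm], where B="2*B"] gb by simp
      ultimately have "AE w in ?M. g w = 0" using integral_nonneg_eq_0_iff_AE[of ?M g] gb by simp
      then have "AE w in ?M. indicator A w = (0::real)"
        by (rule AE_mp) (auto simp: g_def A_def intro!: AE_I2)
      then have "(\<integral>w. indicator A w \<partial>?M) = (0::real)"
        by (rule integral_eq_zero_AE)
      then show "Pf K s (indicator A) y = 0" unfolding Pf_def by simp
    qed
    define P where "P y = Pf K s (indicator A) y" for y
    have im: "indicator A \<in> borel_measurable borel" using Ab by simp
    have ib: "\<bar>indicator A y :: real\<bar> \<le> 1" for y by (simp split: split_indicator)
    have Pm: "P \<in> borel_measurable borel" unfolding P_def by (rule Pf_meas[OF MF s im])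
    have Pb: "0 \<le> P y" "P y \<le> 1" for y
    proof -
      show "0 \<le> P y" unfolding P_def Pf_def by simp
      show "P y \<le> 1" using Pf_bound(1)[OF MF s im ib, of y] unfolding P_def by simp
    qed
    have iP: "integrable \<mu> P" using prob_int_bound(1)[OF mu(2) mcong[OF Pm], where B=1] Pb by (simp add: abs_le_iff)
    have iA: "integrable \<mu> (indicator A :: 'a \<Rightarrow> real)" using prob_int_bound(1)[OF mu(2) mcong[OF im] ib] .
    have APm: "(\<lambda>y. indicator A y * P y) \<in> borel_measurable borel" using Pm im by (rule borel_measurable_times[rotated])
    have APb: "\<bar>indicator A y * P y\<bar> \<le> 1" for y using Pb[of y] by (simp split: split_indicator)
    have iAP: "integrable \<mu> (\<lambda>y. indicator A y * P y)"
      by (rule prob_int_bound(1)[OF mu(2) mcong[OF APm] APb])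
    have "(\<integral>y. P y \<partial>\<mu>) = (\<integral>y. indicator A y \<partial>(\<mu> \<bind> K s))"
      unfolding P_def by (rule bind_int[OF MF s mu(2) mu(1) im ib])
    then have intP: "(\<integral>y. P y \<partial>\<mu>) = (\<integral>y. indicator A y \<partial>\<mu>)" using mu(3)[OF s] by simp
    have "AE y in \<mu>. indicator A y * P y = P y"
      using P1
    proof eventually_elim
      case (elim y) then show ?case unfolding P_def by (cases "y \<in> A") auto
    qed
    then have "(\<integral>y. indicator A y * P y \<partial>\<mu>) = (\<integral>y. P y \<partial>\<mu>)"
      by (rule integral_cong_AE[rotated 2]) (use mcong[OF APm] mcong[OF Pm] in auto)
    then have "(\<integral>y. indicator A y - indicator A y * P y \<partial>\<mu>) = 0"
      using iA iAP intP by simp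
    moreover have "integrable \<mu> (\<lambda>y. indicator A y - indicator A y * P y)" using iA iAP by simp
    moreover have "AE y in \<mu>. 0 \<le> indicator A y - indicator A y * P y"
    proof (rule AE_I2)
      fix y show "0 \<le> indicator A y - indicator A y * P y" using Pb[of y] by (cases "y \<in> A") auto
    qed
    ultimately have E2: "AE y in \<mu>. indicator A y - indicator A y * P y = 0"
      using integral_nonneg_eq_0_iff_AE[of \<mu> "\<lambda>y. indicator A y - indicator A y * P y"] by blast
    show ?thesis using P1 E2
    proof eventually_elim
      case (elim y) then show ?case unfolding P_def by (cases "y \<in> A") auto
    qed
  qed
  then have "measure \<mu> A = 0 \<or> measure \<mu> A = 1" using erg Ab unfolding ergodic_def by auto
  moreover have "measure \<mu> A \<noteq> 1"
  proof -
    obtain d where d: "d > 0" and dd: "\<And>y. dist y z < d \<Longrightarrow> Hr K f z y \<le> c"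
      using stepA[OF MF f B0 B ev bl c] by blast
    have dis: "A \<inter> ball z d = {}" using dd unfolding A_def by (force simp: dist_commute)
    have "emeasure \<mu> (ball z d) > 0" using zs d unfolding supp_def by auto
    then have mb: "measure \<mu> (ball z d) > 0" by (simp add: emeasure_eq_measure)
    have bs: "ball z d \<in> sets \<mu>" using mu(1) by simp
    have As: "A \<in> sets \<mu>" using mu(1) Ab by simp
    have "measure \<mu> (A \<union> ball z d) = measure \<mu> A + measure \<mu> (ball z d)"
      by (rule finite_measure_Union[OF As bs dis])
    moreover have "measure \<mu> (A \<union> ball z d) \<le> 1" by (rule prob_le_1)
    ultimately show ?thesis using mb by linarith
  qed
  ultimately have "measure \<mu> A = 0" by blast
  then have "emeasure \<mu> A = 0" by (simp add: emeasure_eq_measure)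
  then have "AE y in \<mu>. y \<notin> A" using AE_iff_measurable[of A \<mu> "\<lambda>y. y \<notin> A"] Ab mu(1) spc by auto
  then show ?thesis by (rule AE_mp) (auto intro!: AE_I2 simp: A_def)
qed

end


context
  fixes K :: "real \<Rightarrow> 'a::polish_space \<Rightarrow> 'a measure" and f :: "'a \<Rightarrow> real" and z :: 'a and B :: real
  assumes MF: "markov_feller K" and f: "bcont f" and B0: "B \<ge> 0" and B: "\<And>y. \<bar>f y\<bar> \<le> B"
begin

lemma limit_lemma:
  assumes erg: "ergodic K \<mu>" and zs: "z \<in> supp \<mu>" and ev: "cesaro_ev_cont K z"
    and bl: "bounded_lipschitz f"
  shows "(\<lambda>n. Qf K (real n) f z) \<longlonglongrightarrow> (\<integral>y. f y \<partial>\<mu>)"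
proof -
  note mu = ergodicD[OF erg]
  interpret prob_space \<mu> by (rule mu(2))
  have mcong: "g \<in> borel_measurable \<mu>" if "g \<in> borel_measurable borel" for g :: "'a \<Rightarrow> real"
    using that by (subst measurable_cong_sets[OF mu(1) refl])
  note Hb = Hr_bnd[OF MF f B0 B, of z]
  note ub = uu_bnd[OF MF f B0 B, of z]
  note um = uu_meas[OF MF f B0 B, of z]
  have "AE y in \<mu>. \<forall>k::nat. Hr K f z y \<le> 1 / Suc k"
    by (subst AE_all_countable) (intro allI stepF[OF MF f B0 B erg zs ev bl], simp)
  then have AEH: "AE y in \<mu>. Hr K f z y = 0"
  proof eventually_elim
    case (elim y)
    show ?case
    proof (rule ccontr)
      assume "Hr K f z y \<noteq> 0"
      then have "Hr K f z y > 0" using Hb(1)[of y] by simp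
      then obtain k where "inverse (real (Suc k)) < Hr K f z y" using reals_Archimedean by blast
      with elim[rule_format, of k] show False by (simp add: inverse_eq_divide)
    qed
  qed
  have AEu: "AE y in \<mu>. (\<lambda>n. uu K f z n y) \<longlonglongrightarrow> 0"
    using AEH
  proof eventually_elim
    case (elim y)
    then have "HH K f z y = 0" using HH_Hr[OF MF f B0 B, of z y] by simp
    then have "(\<lambda>n. ennreal (uu K f z n y)) \<longlonglongrightarrow> 0" unfolding HH_def by (rule tendsto_0_if_Limsup_eq_0_ennreal)
    then have "(\<lambda>n. ennreal (uu K f z n y)) \<longlonglongrightarrow> ennreal 0" by simp
    then show ?case by (rule tendsto_ennrealD) (auto simp: ub)
  qed
  have lim0: "(\<lambda>n. \<integral>y. uu K f z n y \<partial>\<mu>) \<longlonglongrightarrow> (\<integral>y. 0 \<partial>\<mu>)"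
  proof (rule integral_dominated_convergence[where w="\<lambda>_. 2*B"])
    show "(\<lambda>y. 0::real) \<in> borel_measurable \<mu>" by simp
    show "uu K f z n \<in> borel_measurable \<mu>" for n by (rule mcong[OF um])
    show "integrable \<mu> (\<lambda>_. 2*B)" by simp
    show "AE x in \<mu>. (\<lambda>i. uu K f z i x) \<longlonglongrightarrow> 0" by (rule AEu)
    show "AE x in \<mu>. norm (uu K f z n x) \<le> 2*B" for n using ub by (intro AE_I2) simp
  qed
  have a: "(\<integral>y. Pf K s f y \<partial>\<mu>) = (\<integral>y. f y \<partial>\<mu>)" if "s \<ge> 0" for s
    using bind_int[OF MF that mu(2) mu(1) bcont_meas[OF f] B] mu(3)[OF that] by simp
  have key: "\<bar>(\<integral>y. f y \<partial>\<mu>) - Qf K (real n) f z\<bar> \<le> (\<integral>y. uu K f z n y \<partial>\<mu>)" if n: "n > 0" for n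
  proof -
    let ?Q = "\<lambda>y. Qf K (real n) f y" and ?c = "Qf K (real n) f z"
    have "(\<integral>y. ?Q y \<partial>\<mu>) = (1/real n) * (LBINT s=0..real n. (\<integral>y. Pf K s f y \<partial>\<mu>))"
      by (rule Qf_meas_fubini(2)[OF MF f _ mu(2) mu(1)]) (use n in simp)
    also have "(LBINT s=0..real n. (\<integral>y. Pf K s f y \<partial>\<mu>)) = (\<integral>s. indicator {0..real n} s * (\<integral>y. Pf K s f y \<partial>\<mu>) \<partial>lborel)"
      using lbint_eq[of "real n" "\<lambda>s. \<integral>y. Pf K s f y \<partial>\<mu>"] by (simp add: zero_ereal_def)
    also have "\<dots> = (\<integral>s. indicator {0..real n} s * (\<integral>y. f y \<partial>\<mu>) \<partial>lborel)"
      using a by (intro Bochner_Integration.integral_cong) (auto split: split_indicator)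
    also have "\<dots> = (LBINT s=0..real n. (\<integral>y. f y \<partial>\<mu>))"
      using lbint_eq[of "real n" "\<lambda>s. \<integral>y. f y \<partial>\<mu>"] by (simp add: zero_ereal_def)
    also have "\<dots> = (\<integral>y. f y \<partial>\<mu>) * real n"
      using interval_integral_const(2)[of 0 "real n" "\<integral>y. f y \<partial>\<mu>"] by (simp add: zero_ereal_def)
    finally have eqQ: "(\<integral>y. ?Q y \<partial>\<mu>) = (\<integral>y. f y \<partial>\<mu>)" using n by simp
    have iQ: "integrable \<mu> ?Q"
      using prob_int_bound(1)[OF mu(2) mcong[OF Qf_meas[OF MF f]] Qf_bnd[OF MF f B]] by simp
    have "(\<integral>y. f y \<partial>\<mu>) - ?c = (\<integral>y. ?Q y - ?c \<partial>\<mu>)" using iQ eqQ by (simp add: prob_space)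
    also have "\<bar>\<dots>\<bar> \<le> (\<integral>y. \<bar>?Q y - ?c\<bar> \<partial>\<mu>)"
      using integral_norm_bound[of \<mu> "\<lambda>y. ?Q y - ?c"] by simp
    finally show ?thesis unfolding uu_def .
  qed
  have "(\<lambda>n. (\<integral>y. f y \<partial>\<mu>) - Qf K (real n) f z) \<longlonglongrightarrow> 0"
  proof (rule Lim_null_comparison[OF _ lim0[simplified]])
    show "\<forall>\<^sub>F n in sequentially. norm ((\<integral>y. f y \<partial>\<mu>) - Qf K (real n) f z) \<le> (\<integral>y. uu K f z n y \<partial>\<mu>)"
      using eventually_gt_at_top[of 0] by eventually_elim (use key in simp)
  qed
  then have "(\<lambda>n. (\<integral>y. f y \<partial>\<mu>) - ((\<integral>y. f y \<partial>\<mu>) - Qf K (real n) f z)) \<longlonglongrightarrow> (\<integral>y. f y \<partial>\<mu>) - 0"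
    by (intro tendsto_diff tendsto_const)
  then show ?thesis by simp
qed

end


lemma bl_bcont: "bounded_lipschitz f \<Longrightarrow> bcont f"
  unfolding bounded_lipschitz_def bcont_def using lipschitz_on_continuous_on by blast

lemma measure_eq_bl:
  fixes \<mu> \<nu> :: "'a::metric_space measure"
  assumes s: "sets \<mu> = sets borel" "sets \<nu> = sets borel" and p: "prob_space \<mu>" "prob_space \<nu>"
    and eq: "\<And>f. bounded_lipschitz f \<Longrightarrow> (\<integral>x. f x \<partial>\<mu>) = (\<integral>x. f x \<partial>\<nu>)"
  shows "\<mu> = \<nu>"
proof -
  have cl: "measure M F = measure N F" if F: "closed F" and M: "sets M = sets borel" "prob_space M"
    and N: "sets N = sets borel" "prob_space N"
    and eqMN: "\<And>f. bounded_lipschitz f \<Longrightarrow> (\<integral>x. f x \<partial>M) = (\<integral>x. f x \<partial>N)" for F and M N :: "'a measure"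
  proof (cases "F = {}")
    case True then show ?thesis by simp
  next
    case False
    define h where "h k x = max 0 (1 - real (Suc k) * infdist x F)" for k x
    have hbl: "bounded_lipschitz (h k)" for k
      unfolding bounded_lipschitz_def
    proof
      have "norm (h k x) \<le> 1" for x using infdist_nonneg[of x F] unfolding h_def by auto
      then show "bounded (range (h k))" by (auto simp: bounded_iff)
      have "dist (h k x) (h k y) \<le> real (Suc k) * dist x y" for x y
      proof -
        have "dist (h k x) (h k y) \<le> \<bar>real (Suc k) * infdist x F - real (Suc k) * infdist y F\<bar>"
          unfolding h_def dist_real_def by (auto simp: max_def)
        also have "\<dots> = real (Suc k) * \<bar>infdist x F - infdist y F\<bar>"
          by (simp add: abs_mult right_diff_distrib[symmetric])
        also have "\<dots> \<le> real (Suc k) * dist x y"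
          by (intro mult_left_mono infdist_triangle_abs) simp
        finally show ?thesis .
      qed
      then show "\<exists>L. L-lipschitz_on UNIV (h k)" by (intro exI lipschitz_onI) auto
    qed
    have hm: "h k \<in> borel_measurable borel" for k
      using bl_bcont[OF hbl] by (rule bcont_meas)
    have hlim: "(\<lambda>k. h k x) \<longlonglongrightarrow> indicator F x" for x
    proof (cases "x \<in> F")
      case True
      then have "infdist x F = 0" using in_closed_iff_infdist_zero[OF F False] by simp
      then show ?thesis using True by (simp add: h_def)
    next
      case xF: False
      have pos: "infdist x F > 0" by (rule infdist_pos_not_in_closed[OF F False xF])
      obtain N where N: "inverse (real (Suc N)) < infdist x F" using reals_Archimedean[OF pos] by blast
      have "eventually (\<lambda>k. h k x = 0) sequentially"
        using eventually_ge_at_top[of N]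
      proof eventually_elim
        case (elim k)
        have "1 < real (Suc N) * infdist x F" using N pos by (simp add: field_simps)
        moreover have "real (Suc N) * infdist x F \<le> real (Suc k) * infdist x F"
          using elim pos by (intro mult_right_mono) auto
        ultimately have "1 < real (Suc k) * infdist x F" by linarith
        then show ?case unfolding h_def by simp
      qed
      then have "(\<lambda>k. h k x) \<longlonglongrightarrow> 0" by (rule tendsto_eventually)
      then show ?thesis using xF by simp
    qed
    have conv: "(\<lambda>k. \<integral>x. h k x \<partial>Q) \<longlonglongrightarrow> measure Q F" if Q: "sets Q = sets borel" "prob_space Q" for Q :: "'a measure"
    proof -
      interpret prob_space Q by (rule Q(2))
      have mc: "g \<in> borel_measurable Q" if "g \<in> borel_measurable borel" for g :: "'a \<Rightarrow> real"
        using that by (subst measurable_cong_sets[OF Q(1) refl])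
      have "(\<lambda>k. \<integral>x. h k x \<partial>Q) \<longlonglongrightarrow> (\<integral>x. indicator F x \<partial>Q)"
      proof (rule integral_dominated_convergence[where w="\<lambda>_. 1"])
        have "F \<in> sets borel" using F by (simp add: borel_closed)
        then show "(indicator F :: 'a \<Rightarrow> real) \<in> borel_measurable Q" by (intro mc) simp
        show "h k \<in> borel_measurable Q" for k by (rule mc[OF hm])
        show "integrable Q (\<lambda>_. 1::real)" by simp
        show "AE x in Q. (\<lambda>k. h k x) \<longlonglongrightarrow> indicator F x" using hlim by simp
        show "AE x in Q. norm (h k x) \<le> 1" for k
      proof (intro AE_I2)
        fix x
        have "0 \<le> real (Suc k) * infdist x F" using infdist_nonneg[of x F] by simp
        then show "norm (h k x) \<le> 1" unfolding h_def by auto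
      qed
      qed
      moreover have "space Q = UNIV" using Q(1) sets_eq_imp_space_eq by fastforce
      ultimately show ?thesis by simp
    qed
    have "(\<lambda>k. \<integral>x. h k x \<partial>M) = (\<lambda>k. \<integral>x. h k x \<partial>N)" using eqMN[OF hbl] by simp
    then show ?thesis using LIMSEQ_unique[OF conv[OF M]] conv[OF N] by metis
  qed
  have fm1: "finite_measure \<mu>" using p(1) unfolding prob_space_def by blast
  have fm2: "finite_measure \<nu>" using p(2) unfolding prob_space_def by blast
  show ?thesis
  proof (rule measure_eqI_generator_eq[where E="Collect closed" and \<Omega>=UNIV and A="\<lambda>_. UNIV"])
    show "Int_stable (Collect closed)" by (auto simp: Int_stable_def)
    show "Collect closed \<subseteq> Pow UNIV" by simp
    show "emeasure \<mu> X = emeasure \<nu> X" if "X \<in> Collect closed" for X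
      using cl[of X \<mu> \<nu>] that s p eq
      by (simp add: finite_measure.emeasure_eq_measure[OF fm1] finite_measure.emeasure_eq_measure[OF fm2])
    have "sets (borel :: 'a measure) = sigma_sets UNIV (Collect closed)"
      unfolding borel_eq_closed by (rule sets_measure_of) simp
    then show "sets \<mu> = sigma_sets UNIV (Collect closed)" "sets \<nu> = sigma_sets UNIV (Collect closed)"
      using s by auto
    show "range (\<lambda>_. UNIV) \<subseteq> Collect closed" by auto
    show "(\<Union>i::nat. UNIV) = UNIV" by simp
    show "emeasure \<mu> UNIV \<noteq> \<infinity>" for i :: nat by (simp add: finite_measure.emeasure_eq_measure[OF fm1])
  qed
qed

theorem corollary3p7:
  fixes K :: "real \<Rightarrow> 'a::polish_space \<Rightarrow> 'a measure"
    and \<mu> \<nu> :: "'a measure"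
  assumes "markov_feller K"
    and "\<forall>z. cesaro_ev_cont K z"
    and "ergodic K \<mu>" and "ergodic K \<nu>" and "\<mu> \<noteq> \<nu>"
  shows "supp \<mu> \<inter> supp \<nu> = {}"
proof (rule ccontr)
  assume "supp \<mu> \<inter> supp \<nu> \<noteq> {}"
  then obtain z where z1: "z \<in> supp \<mu>" and z2: "z \<in> supp \<nu>" by blast
  note m1 = ergodicD[OF assms(3)] and m2 = ergodicD[OF assms(4)]
  have "\<mu> = \<nu>"
  proof (rule measure_eq_bl[OF m1(1) m2(1) m1(2) m2(2)])
    fix f :: "'a \<Rightarrow> real" assume bl: "bounded_lipschitz f"
    have f: "bcont f" by (rule bl_bcont[OF bl])
    obtain B where B0: "B \<ge> 0" and B: "\<And>y. \<bar>f y\<bar> \<le> B" using bcont_bound[OF f] by blast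
    have ev: "cesaro_ev_cont K z" using assms(2) by blast
    show "(\<integral>x. f x \<partial>\<mu>) = (\<integral>x. f x \<partial>\<nu>)"
      using LIMSEQ_unique[OF limit_lemma[OF assms(1) f B0 B assms(3) z1 ev bl] limit_lemma[OF assms(1) f B0 B assms(4) z2 ev bl]] .
  qed
  with assms(5) show False by simp
qed


end
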